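(* There is a universal constant $c>0$ such that the following holds. Let $n\ge1$, $N=2^n$, $\beta\in(0,1/2]$, $\epsilon\in[0,\frac{\beta}{n+1})$ and $\delta\in[0,1]$. Every $(\epsilon,\delta,\mathsf{Zipf})$-PAC quantum learner for the concept class $\mathcal{F}_n$ of all Boolean functions $\{0,1\}^n\to\{0,1\}$ uses a number $m$ of quantum examples satisfying \[ m\;\ge\; c\cdot\frac{(1-\delta)(1-H(\beta))N-H(\delta)}{n}. \]
   Context: Identify $\{0,1\}^n$ with $[N]=\{1,\dots,N\}$. The Zipf distribution on $[N]$ is $\mathsf{Zipf}(k)=\frac{1}{kH_N}$, where $H_N=\sum_{k=1}^N \frac1k$. For a concept $c:\{0,1\}^n\to\{0,1\}$ and a distribution $D$, a quantum example is one copy of the state $\sum_{x\in\{0,1\}^n}\sqrt{D(x)}\,|x\rangle|c(x)\rangle$. An $(\epsilon,\delta,D)$-PAC quantum learner for a concept class $\mathcal{C}$ is an algorithm that, for every $c\in\mathcal{C}$, given $m$ quantum examples (for $c$ and $D$), outputs a hypothesis $h:\{0,1\}^n\to\{0,1\}$ such that, with probability at least $1-\delta$, $\Pr_{x\sim D}[c(x)\ne h(x)]\le\epsilon$. $H(p)=-p\log_2p-(1-p)\log_2(1-p)$ is the binary entropy. *)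

theory Defs
  imports Complex_Main
begin

text \<open>Identify {0,1}^n with [N] = {1..N}, N = 2^n.  Boolean functions on [N] are
  represented canonically as predicates nat => bool that are False outside [N].\<close>

definition harm :: "nat \<Rightarrow> real" where
  "harm N = (\<Sum>k=1..N. 1 / real k)"

definition zipf :: "nat \<Rightarrow> nat \<Rightarrow> real" where
  "zipf N k = (if k \<in> {1..N} then 1 / (real k * harm N) else 0)"

definition bin_entropy :: "real \<Rightarrow> real" where
  "bin_entropy p = - p * log 2 p - (1 - p) * log 2 (1 - p)"

definition boolfuns :: "nat \<Rightarrow> (nat \<Rightarrow> bool) set" where
  "boolfuns N = {f. \<forall>x. x \<notin> {1..N} \<longrightarrow> \<not> f x}"

text \<open>Computational basis of m copies of the register [N] x {0,1}.\<close>
definition basis :: "nat \<Rightarrow> nat \<Rightarrow> (nat \<times> bool) list set" where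
  "basis N m = {xs. length xs = m \<and> (\<forall>p\<in>set xs. fst p \<in> {1..N})}"

text \<open>Amplitudes of one quantum example  sum_x sqrt(D x) |x>|c x>.\<close>
definition qexample :: "(nat \<Rightarrow> real) \<Rightarrow> (nat \<Rightarrow> bool) \<Rightarrow> nat \<times> bool \<Rightarrow> complex" where
  "qexample D c p = (if snd p = c (fst p) then complex_of_real (sqrt (D (fst p))) else 0)"

text \<open>Amplitudes of the m-fold tensor power of the quantum example state.\<close>
definition qexamples :: "(nat \<Rightarrow> real) \<Rightarrow> (nat \<Rightarrow> bool) \<Rightarrow> (nat \<times> bool) list \<Rightarrow> complex" where
  "qexamples D c xs = (\<Prod>p\<leftarrow>xs. qexample D c p)"

text \<open>A POVM on the m-copy space whose outcomes are hypotheses h in boolfuns N.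
  Operators are given by their matrices w.r.t. the computational basis.\<close>
definition is_povm :: "nat \<Rightarrow> nat \<Rightarrow> ((nat \<Rightarrow> bool) \<Rightarrow> (nat \<times> bool) list \<Rightarrow> (nat \<times> bool) list \<Rightarrow> complex) \<Rightarrow> bool" where
  "is_povm N m M \<longleftrightarrow>
     (\<forall>h\<in>boolfuns N. \<forall>i\<in>basis N m. \<forall>j\<in>basis N m. M h j i = cnj (M h i j)) \<and>
     (\<forall>h\<in>boolfuns N. \<forall>v :: (nat \<times> bool) list \<Rightarrow> complex.
        Re (\<Sum>i\<in>basis N m. \<Sum>j\<in>basis N m. cnj (v i) * M h i j * v j) \<ge> 0) \<and>
     (\<forall>i\<in>basis N m. \<forall>j\<in>basis N m. (\<Sum>h\<in>boolfuns N. M h i j) = (if i = j then 1 else 0))"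

definition outcome_prob ::
  "nat \<Rightarrow> nat \<Rightarrow> ((nat \<Rightarrow> bool) \<Rightarrow> (nat \<times> bool) list \<Rightarrow> (nat \<times> bool) list \<Rightarrow> complex)
   \<Rightarrow> (nat \<Rightarrow> real) \<Rightarrow> (nat \<Rightarrow> bool) \<Rightarrow> (nat \<Rightarrow> bool) \<Rightarrow> real" where
  "outcome_prob N m M D c h =
     Re (\<Sum>i\<in>basis N m. \<Sum>j\<in>basis N m. cnj (qexamples D c i) * M h i j * qexamples D c j)"

definition err :: "nat \<Rightarrow> (nat \<Rightarrow> real) \<Rightarrow> (nat \<Rightarrow> bool) \<Rightarrow> (nat \<Rightarrow> bool) \<Rightarrow> real" where
  "err N D c h = (\<Sum>x\<in>{x\<in>{1..N}. c x \<noteq> h x}. D x)"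

text \<open>A quantum learner using m quantum examples is (the most general quantum
  procedure, i.e.) a POVM on the m copies with outcomes hypotheses.\<close>
definition pac_quantum_learner ::
  "nat \<Rightarrow> real \<Rightarrow> real \<Rightarrow> (nat \<Rightarrow> real) \<Rightarrow> nat
   \<Rightarrow> ((nat \<Rightarrow> bool) \<Rightarrow> (nat \<times> bool) list \<Rightarrow> (nat \<times> bool) list \<Rightarrow> complex) \<Rightarrow> bool" where
  "pac_quantum_learner N \<epsilon> \<delta> D m M \<longleftrightarrow> is_povm N m M \<and>
     (\<forall>c\<in>boolfuns N.
        (\<Sum>h\<in>{h\<in>boolfuns N. err N D c h \<le> \<epsilon>}. outcome_prob N m M D c h) \<ge> 1 - \<delta>)"

end

theory Submission
  imports Defs
begin

lemma harm_pos: "N \<ge> 1 \<Longrightarrow> harm N > 0"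
  unfolding harm_def by (intro sum_pos) auto

lemma harm_pow2: "harm (2^n) \<le> real n + 1"
proof (induction n)
  case 0 then show ?case by (simp add: harm_def)
next
  case (Suc n)
  have split: "harm (2^Suc n) = harm (2^n) + (\<Sum>k=2^n+1..2^n+2^n. 1 / real k)"
    unfolding harm_def using sum.ub_add_nat[of 1 "2^n" "\<lambda>k. 1 / real k" "2^n"] by (simp add: mult_2)
  have "(\<Sum>k=2^n+1..2^n+2^n. 1 / real k) \<le> real (card {2^n+1..2^n+(2^n::nat)}) * (1 / 2^n)"
  proof (rule sum_bounded_above)
    fix k assume "k \<in> {2^n+1..2^n+(2^n::nat)}"
    then have "real k \<ge> 2^n" by simp
    moreover have "(2::real)^n > 0" by simp
    ultimately show "1 / real k \<le> 1 / 2^n" by (simp add: frac_le)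
  qed
  also have "\<dots> = 1" by simp
  finally show ?case using split Suc by simp
qed

definition LL :: "'a set \<Rightarrow> nat \<Rightarrow> 'a list set" where
  "LL A m = {xs. set xs \<subseteq> A \<and> length xs = m}"

lemma LL_Suc: "LL A (Suc m) = (\<lambda>(a,xs). a#xs) ` (A \<times> LL A m)"
  unfolding LL_def by (auto simp: length_Suc_conv image_iff)

lemma sum_LL:
  fixes g :: "'a \<Rightarrow> 'b::comm_semiring_1"
  assumes "finite A"
  shows "(\<Sum>xs\<in>LL A m. prod_list (map g xs)) = (sum g A)^m"
proof (induction m)
  case 0
  have "LL A 0 = {[]}" by (auto simp: LL_def)
  then show ?case by simp
next
  case (Suc m)
  have inj: "inj_on (\<lambda>(a,xs). a#xs) (A \<times> LL A m)" by (auto simp: inj_on_def)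
  have fin: "finite (LL A m)" unfolding LL_def using finite_lists_length_eq[OF assms] by simp
  have "(\<Sum>xs\<in>LL A (Suc m). prod_list (map g xs)) = (\<Sum>(a,xs)\<in>A \<times> LL A m. g a * prod_list (map g xs))"
    unfolding LL_Suc by (subst sum.reindex[OF inj]) (simp add: case_prod_beta)
  also have "\<dots> = (\<Sum>a\<in>A. \<Sum>xs\<in>LL A m. g a * prod_list (map g xs))"
    by (rule sum.cartesian_product[symmetric])
  also have "\<dots> = (\<Sum>a\<in>A. g a * (sum g A)^m)" by (simp add: sum_distrib_left[symmetric] Suc)
  also have "\<dots> = (sum g A)^Suc m" by (simp add: sum_distrib_right)
  finally show ?case .
qed

lemma sgn_cmod: "sgn z * complex_of_real (cmod z) = z"
  by (cases "z = 0") (simp_all add: sgn_eq)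

lemma cnj_w: "cnj z * w * z = complex_of_real ((cmod z)^2) * w"
proof -
  have "cnj z * w * z = (z * cnj z) * w" by (simp add: algebra_simps)
  then show ?thesis by (simp only: complex_norm_square)
qed

lemma sum_one_pt:
  fixes f :: "'a \<Rightarrow> 'b::comm_monoid_add"
  assumes "finite I" "i \<in> I" "\<And>k. k \<noteq> i \<Longrightarrow> f k = 0"
  shows "sum f I = f i"
proof -
  have "sum f {i} = sum f I"
    by (rule sum.mono_neutral_left) (use assms in auto)
  then show ?thesis by simp
qed

lemma sum_two_pts:
  fixes f :: "'a \<Rightarrow> 'b::comm_monoid_add"
  assumes "finite I" "i \<in> I" "j \<in> I" "i \<noteq> j" "\<And>k. k \<noteq> i \<Longrightarrow> k \<noteq> j \<Longrightarrow> f k = 0"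
  shows "sum f I = f i + f j"
proof -
  have "sum f {i,j} = sum f I"
    by (rule sum.mono_neutral_left) (use assms in auto)
  then show ?thesis using assms by simp
qed

lemma psd_diag:
  fixes M :: "'a \<Rightarrow> 'a \<Rightarrow> complex"
  assumes fin: "finite I" and psd: "\<forall>v. Re (\<Sum>i\<in>I. \<Sum>j\<in>I. cnj (v i) * M i j * v j) \<ge> 0"
    and i: "i \<in> I"
  shows "Re (M i i) \<ge> 0"
proof -
  let ?v = "\<lambda>k. if k = i then (1::complex) else 0"
  have inner: "(\<Sum>l\<in>I. cnj (?v k) * M k l * ?v l) = cnj (?v k) * M k i" for k
    by (rule trans[OF sum_one_pt[OF fin i]]) simp_all
  have "(\<Sum>k\<in>I. \<Sum>l\<in>I. cnj (?v k) * M k l * ?v l) = M i i"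
    unfolding inner by (rule trans[OF sum_one_pt[OF fin i]]) simp_all
  moreover have "Re (\<Sum>k\<in>I. \<Sum>l\<in>I. cnj (?v k) * M k l * ?v l) \<ge> 0" using psd by (rule spec)
  ultimately show ?thesis by simp
qed

lemma psd_pair:
  fixes M :: "'a \<Rightarrow> 'a \<Rightarrow> complex"
  assumes fin: "finite I" and psd: "\<forall>v. Re (\<Sum>i\<in>I. \<Sum>j\<in>I. cnj (v i) * M i j * v j) \<ge> 0"
    and i: "i \<in> I" and j: "j \<in> I"
  shows "cmod (\<psi> j)^2 * Re (M i i) + cmod (\<psi> i)^2 * Re (M j j)
          - Re (cnj (\<psi> i) * M i j * \<psi> j) - Re (cnj (\<psi> j) * M j i * \<psi> i) \<ge> 0"
proof (cases "i = j")
  case True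
  then show ?thesis by (simp add: cnj_w)
next
  case False
  define a where "a = sgn (\<psi> i) * complex_of_real (cmod (\<psi> j))"
  define b where "b = - sgn (\<psi> j) * complex_of_real (cmod (\<psi> i))"
  define v where "v = (\<lambda>k. if k = i then a else if k = j then b else 0)"
  have inner: "(\<Sum>l\<in>I. cnj (v k) * M k l * v l) = cnj (v k) * M k i * a + cnj (v k) * M k j * b" for k
    by (subst sum_two_pts[OF fin i j False]) (use False in \<open>auto simp: v_def\<close>)
  have e0: "(\<Sum>k\<in>I. \<Sum>l\<in>I. cnj (v k) * M k l * v l)
      = (cnj a * M i i * a + cnj a * M i j * b) + (cnj b * M j i * a + cnj b * M j j * b)"
    unfolding inner by (subst sum_two_pts[OF fin i j False]) (use False in \<open>auto simp: v_def\<close>)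
  have e1: "cnj a * M i j * b = - (cnj (\<psi> i) * M i j * \<psi> j)"
  proof -
    have "cnj a * M i j * b = - (cnj (sgn (\<psi> i) * complex_of_real (cmod (\<psi> i))) * M i j * (sgn (\<psi> j) * complex_of_real (cmod (\<psi> j))))"
      by (simp add: a_def b_def algebra_simps)
    then show ?thesis by (simp add: sgn_cmod)
  qed
  have e2: "cnj b * M j i * a = - (cnj (\<psi> j) * M j i * \<psi> i)"
  proof -
    have "cnj b * M j i * a = - (cnj (sgn (\<psi> j) * complex_of_real (cmod (\<psi> j))) * M j i * (sgn (\<psi> i) * complex_of_real (cmod (\<psi> i))))"
      by (simp add: a_def b_def algebra_simps)
    then show ?thesis by (simp add: sgn_cmod)
  qed
  have eq: "Re (\<Sum>k\<in>I. \<Sum>l\<in>I. cnj (v k) * M k l * v l)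
      = cmod a ^ 2 * Re (M i i) + cmod b ^ 2 * Re (M j j) - Re (cnj (\<psi> i) * M i j * \<psi> j) - Re (cnj (\<psi> j) * M j i * \<psi> i)"
    unfolding e0 e1 e2 by (simp add: cnj_w)
  have ca: "cmod a ^ 2 \<le> cmod (\<psi> j) ^ 2" unfolding a_def by (simp add: norm_mult norm_sgn)
  have cb: "cmod b ^ 2 \<le> cmod (\<psi> i) ^ 2" unfolding b_def by (simp add: norm_mult norm_sgn)
  have d1: "Re (M i i) \<ge> 0" by (rule psd_diag[OF fin psd i])
  have d2: "Re (M j j) \<ge> 0" by (rule psd_diag[OF fin psd j])
  have "0 \<le> Re (\<Sum>k\<in>I. \<Sum>l\<in>I. cnj (v k) * M k l * v l)" using psd by blast
  moreover have "cmod a ^ 2 * Re (M i i) \<le> cmod (\<psi> j)^2 * Re (M i i)" by (rule mult_right_mono[OF ca d1])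
  moreover have "cmod b ^ 2 * Re (M j j) \<le> cmod (\<psi> i)^2 * Re (M j j)" by (rule mult_right_mono[OF cb d2])
  ultimately show ?thesis unfolding eq by linarith
qed

lemma psd_trace:
  fixes M :: "'a \<Rightarrow> 'a \<Rightarrow> complex"
  assumes fin: "finite I" and psd: "\<forall>v. Re (\<Sum>i\<in>I. \<Sum>j\<in>I. cnj (v i) * M i j * v j) \<ge> 0"
  shows "Re (\<Sum>i\<in>I. \<Sum>j\<in>I. cnj (\<psi> i) * M i j * \<psi> j) \<le> (\<Sum>i\<in>I. cmod (\<psi> i)^2) * (\<Sum>i\<in>I. Re (M i i))"
proof -
  define Q where "Q i j = cmod (\<psi> j)^2 * Re (M i i) + cmod (\<psi> i)^2 * Re (M j j)
          - Re (cnj (\<psi> i) * M i j * \<psi> j) - Re (cnj (\<psi> j) * M j i * \<psi> i)" for i j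
  have h0: "0 \<le> (\<Sum>i\<in>I. \<Sum>j\<in>I. Q i j)"
    unfolding Q_def by (intro sum_nonneg psd_pair[OF fin psd])
  have h1: "(\<Sum>i\<in>I. \<Sum>j\<in>I. Q i j) =
      (\<Sum>i\<in>I. \<Sum>j\<in>I. cmod (\<psi> j)^2 * Re (M i i)) + (\<Sum>i\<in>I. \<Sum>j\<in>I. cmod (\<psi> i)^2 * Re (M j j))
      - (\<Sum>i\<in>I. \<Sum>j\<in>I. Re (cnj (\<psi> i) * M i j * \<psi> j)) - (\<Sum>i\<in>I. \<Sum>j\<in>I. Re (cnj (\<psi> j) * M j i * \<psi> i))"
    unfolding Q_def by (simp add: sum.distrib sum_subtractf)
  have h2: "(\<Sum>i\<in>I. \<Sum>j\<in>I. cmod (\<psi> i)^2 * Re (M j j)) = (\<Sum>i\<in>I. cmod (\<psi> i)^2) * (\<Sum>i\<in>I. Re (M i i))"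
    by (simp add: sum_product)
  have h3: "(\<Sum>i\<in>I. \<Sum>j\<in>I. cmod (\<psi> j)^2 * Re (M i i)) = (\<Sum>i\<in>I. \<Sum>j\<in>I. cmod (\<psi> i)^2 * Re (M j j))"
    by (rule sum.swap)
  have h4: "(\<Sum>i\<in>I. \<Sum>j\<in>I. Re (cnj (\<psi> j) * M j i * \<psi> i)) = (\<Sum>i\<in>I. \<Sum>j\<in>I. Re (cnj (\<psi> i) * M i j * \<psi> j))"
    by (rule sum.swap)
  have h5: "(\<Sum>i\<in>I. \<Sum>j\<in>I. Re (cnj (\<psi> i) * M i j * \<psi> j)) = Re (\<Sum>i\<in>I. \<Sum>j\<in>I. cnj (\<psi> i) * M i j * \<psi> j)"
    by (simp add: Re_sum)
  show ?thesis using h0 unfolding h1 h3 h4 h5 h2 by linarith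
qed

lemma basis_LL: "basis N m = LL ({1..N} \<times> UNIV) m"
  unfolding basis_def LL_def by auto

lemma fin_basis: "finite (basis N m)"
  unfolding basis_LL LL_def by (rule finite_lists_length_eq) simp

lemma card_basis: "card (basis N m) = (2 * N)^m"
  unfolding basis_LL LL_def by (subst card_lists_length_eq) (simp_all add: card_cartesian_product mult.commute)

lemma cmod_prod_list_sq: "(cmod (prod_list (map f xs)))^2 = prod_list (map (\<lambda>p. (cmod (f p))^2) xs)"
  by (induction xs) (simp_all add: norm_mult power_mult_distrib)

lemma harm_nonneg: "harm N \<ge> 0"
  unfolding harm_def by (rule sum_nonneg) simp

lemma zipf_nonneg: "zipf N x \<ge> 0"
  unfolding zipf_def using harm_nonneg[of N] by simp

lemma zipf_sum: "N \<ge> 1 \<Longrightarrow> (\<Sum>x\<in>{1..N}. zipf N x) = 1"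
proof -
  assume N: "N \<ge> 1"
  have "(\<Sum>x\<in>{1..N}. zipf N x) = (\<Sum>x\<in>{1..N}. (1 / real x) / harm N)"
    unfolding zipf_def by (intro sum.cong) auto
  also have "\<dots> = (\<Sum>x\<in>{1..N}. 1 / real x) / harm N" by (rule sum_divide_distrib[symmetric])
  also have "\<dots> = harm N / harm N" unfolding harm_def ..
  also have "\<dots> = 1" using harm_pos[OF N] by simp
  finally show ?thesis .
qed

lemma norm_qexamples:
  assumes N: "N \<ge> 1"
  shows "(\<Sum>xs\<in>basis N m. (cmod (qexamples (zipf N) c xs))^2) = 1"
proof -
  define g where "g p = (cmod (qexample (zipf N) c p))^2" for p
  have "(\<Sum>xs\<in>basis N m. (cmod (qexamples (zipf N) c xs))^2) = (\<Sum>xs\<in>LL ({1..N} \<times> UNIV) m. prod_list (map g xs))"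
    unfolding basis_LL qexamples_def cmod_prod_list_sq g_def by simp
  also have "\<dots> = (sum g ({1..N} \<times> UNIV))^m" by (rule sum_LL) simp
  finally have e1: "(\<Sum>xs\<in>basis N m. (cmod (qexamples (zipf N) c xs))^2) = (sum g ({1..N} \<times> UNIV))^m" .
  have e2: "sum g ({1..N} \<times> UNIV) = (\<Sum>x\<in>{1..N}. \<Sum>b\<in>UNIV. g (x,b))"
    by (simp add: sum.cartesian_product)
  have e3: "(\<Sum>x\<in>{1..N}. \<Sum>b\<in>UNIV. g (x,b)) = (\<Sum>x\<in>{1..N}. zipf N x)"
  proof (intro sum.cong refl)
    fix x
    have "(\<Sum>b\<in>UNIV. g (x,b)) = g (x, True) + g (x, False)" by (simp add: UNIV_bool)
    also have "\<dots> = zipf N x"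
      unfolding g_def qexample_def using zipf_nonneg[of N x] by (cases "c x") simp_all
    finally show "(\<Sum>b\<in>UNIV. g (x,b)) = zipf N x" .
  qed
  show ?thesis unfolding e1 e2 e3 zipf_sum[OF N] by simp
qed

definition Tr :: "nat \<Rightarrow> nat \<Rightarrow> ((nat \<Rightarrow> bool) \<Rightarrow> (nat \<times> bool) list \<Rightarrow> (nat \<times> bool) list \<Rightarrow> complex) \<Rightarrow> (nat \<Rightarrow> bool) \<Rightarrow> real" where
  "Tr N m M h = (\<Sum>i\<in>basis N m. Re (M h i i))"

lemma prob_le_Tr:
  assumes N: "N \<ge> 1" and P: "is_povm N m M" and h: "h \<in> boolfuns N"
  shows "outcome_prob N m M (zipf N) c h \<le> Tr N m M h"
proof -
  have psd: "\<forall>v. Re (\<Sum>i\<in>basis N m. \<Sum>j\<in>basis N m. cnj (v i) * M h i j * v j) \<ge> 0"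
    using P h unfolding is_povm_def by blast
  show ?thesis
    unfolding outcome_prob_def Tr_def
    using psd_trace[OF fin_basis psd, of "qexamples (zipf N) c"] unfolding norm_qexamples[OF N] by (simp only: mult_1)
qed

lemma Tr_nonneg:
  assumes P: "is_povm N m M" and h: "h \<in> boolfuns N"
  shows "Tr N m M h \<ge> 0"
proof -
  have psd: "\<forall>v. Re (\<Sum>i\<in>basis N m. \<Sum>j\<in>basis N m. cnj (v i) * M h i j * v j) \<ge> 0"
    using P h unfolding is_povm_def by blast
  show ?thesis unfolding Tr_def by (intro sum_nonneg psd_diag[OF fin_basis psd])
qed

lemma boolfuns_eq: "boolfuns N = (\<lambda>S x. x \<in> S) ` Pow {1..N}"
proof
  show "boolfuns N \<subseteq> (\<lambda>S x. x \<in> S) ` Pow {1..N}"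
  proof
    fix f assume "f \<in> boolfuns N"
    then have "f = (\<lambda>x. x \<in> {x\<in>{1..N}. f x})" unfolding boolfuns_def by auto
    then show "f \<in> (\<lambda>S x. x \<in> S) ` Pow {1..N}" by blast
  qed
qed (auto simp: boolfuns_def)

lemma fin_boolfuns: "finite (boolfuns N)"
  unfolding boolfuns_eq by simp

lemma card_boolfuns: "card (boolfuns N) = 2^N"
proof -
  have "inj_on (\<lambda>S x. x \<in> S) (Pow {1..N})"
    by (auto simp: inj_on_def fun_eq_iff)
  then show ?thesis unfolding boolfuns_eq by (simp add: card_image card_Pow)
qed

lemma Tr_sum:
  assumes P: "is_povm N m M"
  shows "(\<Sum>h\<in>boolfuns N. Tr N m M h) = real ((2 * N)^m)"
proof -
  have "(\<Sum>h\<in>boolfuns N. Tr N m M h) = (\<Sum>i\<in>basis N m. Re (\<Sum>h\<in>boolfuns N. M h i i))"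
    unfolding Tr_def by (subst sum.swap) (simp add: Re_sum)
  also have "\<dots> = (\<Sum>i\<in>basis N m. 1)"
  proof (rule sum.cong[OF refl])
    fix i assume i: "i \<in> basis N m"
    have "\<forall>i\<in>basis N m. \<forall>j\<in>basis N m. (\<Sum>h\<in>boolfuns N. M h i j) = (if i = j then 1 else 0)"
      using P unfolding is_povm_def by (elim conjE)
    then have "(\<Sum>h\<in>boolfuns N. M h i i) = 1" using i by simp
    then show "Re (\<Sum>h\<in>boolfuns N. M h i i) = 1" by simp
  qed
  also have "\<dots> = real ((2 * N)^m)" by (simp add: card_basis)
  finally show ?thesis .
qed

lemma point_bound:
  fixes \<beta> :: real and k N :: nat
  assumes b0: "0 < \<beta>" and b1: "\<beta> \<le> 1/2" and kb: "real k \<le> \<beta> * N" and kN: "k \<le> N"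
  shows "\<beta> powr (\<beta> * N) * (1-\<beta>) powr ((1-\<beta>) * N) \<le> \<beta>^k * (1-\<beta>)^(N-k)"
proof -
  define r where "r = \<beta> / (1-\<beta>)"
  have q0: "1 - \<beta> > 0" using b1 by simp
  have r0: "r > 0" and r1: "r \<le> 1" unfolding r_def using b0 b1 q0 by (simp_all add: field_simps)
  have br: "\<beta> = r * (1-\<beta>)" unfolding r_def using q0 by simp
  have t1: "\<beta>^k * (1-\<beta>)^(N-k) = r powr (real k) * (1-\<beta>) powr (real N)"
  proof -
    have "\<beta>^k * (1-\<beta>)^(N-k) = \<beta> powr (real k) * (1-\<beta>) powr (real N - real k)"
    proof -
      have "\<beta>^k = \<beta> powr (real k)" using b0 by (simp add: powr_realpow)
      moreover have "(1-\<beta>)^(N-k) = (1-\<beta>) powr (real (N-k))" using q0 by (simp add: powr_realpow)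
      moreover have "real (N-k) = real N - real k" using kN by (rule of_nat_diff)
      ultimately show ?thesis by simp
    qed
    also have "\<beta> powr (real k) = r powr (real k) * (1-\<beta>) powr (real k)"
      by (subst br) (simp add: powr_mult r0 q0 less_imp_le)
    finally have "\<beta>^k * (1-\<beta>)^(N-k) = r powr (real k) * ((1-\<beta>) powr (real k) * (1-\<beta>) powr (real N - real k))"
      by (simp add: mult.assoc)
    also have "(1-\<beta>) powr (real k) * (1-\<beta>) powr (real N - real k) = (1-\<beta>) powr (real N)"
      by (simp add: powr_add[symmetric])
    finally show ?thesis .
  qed
  have t2: "\<beta> powr (\<beta> * N) * (1-\<beta>) powr ((1-\<beta>) * N) = r powr (\<beta> * N) * (1-\<beta>) powr (real N)"
  proof -
    have "\<beta> powr (\<beta> * N) = r powr (\<beta> * N) * (1-\<beta>) powr (\<beta> * N)"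
      by (subst br) (simp add: powr_mult r0 q0 less_imp_le)
    moreover have "(1-\<beta>) powr (\<beta> * N) * (1-\<beta>) powr ((1-\<beta>) * N) = (1-\<beta>) powr (real N)"
      by (simp add: powr_add[symmetric] algebra_simps)
    ultimately show ?thesis by (simp add: mult.assoc)
  qed
  have "r powr (\<beta> * N) \<le> r powr (real k)"
    by (rule powr_mono'[OF kb]) (use r0 r1 in auto)
  then show ?thesis unfolding t1 t2 by (rule mult_right_mono) simp
qed

lemma tail_bound:
  fixes A :: "'a set" and \<beta> :: real
  assumes fin: "finite A" and b0: "0 < \<beta>" and b1: "\<beta> \<le> 1/2"
  shows "real (card {S\<in>Pow A. real (card S) \<le> \<beta> * card A}) * (\<beta> powr (\<beta> * card A) * (1-\<beta>) powr ((1-\<beta>) * card A)) \<le> 1"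
proof -
  define N where "N = card A"
  define K where "K = \<beta> powr (\<beta> * N) * (1-\<beta>) powr ((1-\<beta>) * N)"
  define Sub where "Sub = {S\<in>Pow A. real (card S) \<le> \<beta> * N}"
  have q0: "1 - \<beta> > 0" using b1 by simp
  have all: "(\<Sum>X\<in>Pow A. \<beta>^card X * (1-\<beta>)^card (A - X)) = 1"
  proof -
    have "(\<Prod>x\<in>A. \<beta> + (1-\<beta>)) = (\<Sum>X\<in>Pow A. (\<Prod>x\<in>X. \<beta>) * (\<Prod>x\<in>A-X. (1-\<beta>)))"
      by (rule prod_add[OF fin])
    then show ?thesis by simp
  qed
  have finS: "finite Sub" unfolding Sub_def using fin by simp
  have "real (card Sub) * K = (\<Sum>X\<in>Sub. K)" by simp
  also have "\<dots> \<le> (\<Sum>X\<in>Sub. \<beta>^card X * (1-\<beta>)^card (A - X))"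
  proof (rule sum_mono)
    fix X assume X: "X \<in> Sub"
    then have XA: "X \<subseteq> A" and kb: "real (card X) \<le> \<beta> * N" unfolding Sub_def by auto
    have kN: "card X \<le> N" unfolding N_def using XA fin by (simp add: card_mono)
    have "card (A - X) = N - card X" unfolding N_def using XA fin by (simp add: card_Diff_subset finite_subset)
    then show "K \<le> \<beta>^card X * (1-\<beta>)^card (A - X)"
      unfolding K_def using point_bound[OF b0 b1 kb kN] by simp
  qed
  also have "\<dots> \<le> (\<Sum>X\<in>Pow A. \<beta>^card X * (1-\<beta>)^card (A - X))"
    by (rule sum_mono2) (use fin b0 q0 in \<open>auto simp: Sub_def\<close>)
  also have "\<dots> = 1" by (rule all)
  finally show ?thesis unfolding Sub_def K_def N_def .
qed

lemma err_card:
  assumes N: "N \<ge> 1"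
  shows "real (card {x\<in>{1..N}. c x \<noteq> h x}) / (real N * harm N) \<le> err N (zipf N) c h"
proof -
  define S where "S = {x\<in>{1..N}. c x \<noteq> h x}"
  have H: "harm N > 0" by (rule harm_pos[OF N])
  have "real (card S) / (real N * harm N) = (\<Sum>x\<in>S. 1 / (real N * harm N))" by simp
  also have "\<dots> \<le> (\<Sum>x\<in>S. zipf N x)"
  proof (rule sum_mono)
    fix x assume "x \<in> S"
    then have x1: "1 \<le> x" and xN: "x \<le> N" unfolding S_def by auto
    have "real x * harm N \<le> real N * harm N" using xN H by simp
    moreover have "0 < real x * harm N" using x1 H by simp
    ultimately have "1 / (real N * harm N) \<le> 1 / (real x * harm N)"
    proof (intro divide_left_mono)
      have "0 < real N * harm N" using N H by simp
      then show "0 < real N * harm N * (real x * harm N)" using \<open>0 < real x * harm N\<close> by simp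
    qed (use xN H in simp_all)
    then show "1 / (real N * harm N) \<le> zipf N x" unfolding zipf_def using x1 xN by simp
  qed
  also have "\<dots> = err N (zipf N) c h" unfolding err_def S_def ..
  finally show ?thesis unfolding S_def .
qed

lemma ball_card:
  assumes n: "n \<ge> 1" and e0: "0 \<le> \<epsilon>" and eb: "\<epsilon> < \<beta> / (real n + 1)"
  shows "card {c\<in>boolfuns (2^n). err (2^n) (zipf (2^n)) c h \<le> \<epsilon>}
         \<le> card {S\<in>Pow {1..(2::nat)^n}. real (card S) \<le> \<beta> * card {1..(2::nat)^n}}"
proof -
  define N :: nat where "N = 2^n"
  have N1: "N \<ge> 1" unfolding N_def by simp
  have H: "harm N > 0" by (rule harm_pos[OF N1])
  have HN: "harm N \<le> real n + 1" unfolding N_def by (rule harm_pow2)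
  define f where "f c = {x\<in>{1..N}. c x \<noteq> h x}" for c :: "nat \<Rightarrow> bool"
  have "card {c\<in>boolfuns N. err N (zipf N) c h \<le> \<epsilon>} \<le> card {S\<in>Pow {1..N}. real (card S) \<le> \<beta> * card {1..N}}"
  proof (rule card_inj_on_le[where f = f])
    show "inj_on f {c\<in>boolfuns N. err N (zipf N) c h \<le> \<epsilon>}"
    proof (rule inj_onI)
      fix c c' assume c: "c \<in> {c\<in>boolfuns N. err N (zipf N) c h \<le> \<epsilon>}"
        and c': "c' \<in> {c\<in>boolfuns N. err N (zipf N) c h \<le> \<epsilon>}" and eq: "f c = f c'"
      show "c = c'"
      proof
        fix x show "c x = c' x"
        proof (cases "x \<in> {1..N}")
          case True
          then have "(c x \<noteq> h x) = (c' x \<noteq> h x)" using eq unfolding f_def by (simp add: set_eq_iff) metis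
          then show ?thesis by blast
        next
          case False
          then show ?thesis using c c' unfolding boolfuns_def by auto
        qed
      qed
    qed
    show "f ` {c\<in>boolfuns N. err N (zipf N) c h \<le> \<epsilon>} \<subseteq> {S\<in>Pow {1..N}. real (card S) \<le> \<beta> * card {1..N}}"
    proof
      fix S assume "S \<in> f ` {c\<in>boolfuns N. err N (zipf N) c h \<le> \<epsilon>}"
      then obtain c where ce: "err N (zipf N) c h \<le> \<epsilon>" and S: "S = f c" by auto
      have NH: "real N * harm N > 0" using N1 H by simp
      have "real (card S) / (real N * harm N) \<le> \<epsilon>" using err_card[OF N1, of c h] ce unfolding S f_def by linarith
      then have "real (card S) \<le> \<epsilon> * (real N * harm N)" using NH by (simp add: pos_divide_le_eq)
      also have "\<dots> \<le> \<epsilon> * (real N * (real n + 1))" using e0 HN by (intro mult_left_mono) simp_all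
      also have "\<dots> = real N * (\<epsilon> * (real n + 1))" by simp
      also have "\<dots> \<le> real N * \<beta>" using eb by (intro mult_left_mono) (simp_all add: pos_less_divide_eq less_imp_le)
      finally have "real (card S) \<le> \<beta> * card {1..N}" by (simp add: mult.commute)
      moreover have "S \<subseteq> {1..N}" unfolding S f_def by auto
      ultimately show "S \<in> {S\<in>Pow {1..N}. real (card S) \<le> \<beta> * card {1..N}}" by simp
    qed
    show "finite {S\<in>Pow {1..N}. real (card S) \<le> \<beta> * card {1..N}}" by simp
  qed
  then show ?thesis unfolding N_def .
qed

lemma key:
  fixes n m :: nat and \<beta> \<epsilon> \<delta> :: real
  assumes n: "n \<ge> 1" and b0: "0 < \<beta>" and b1: "\<beta> \<le> 1/2" and e0: "0 \<le> \<epsilon>"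
    and eb: "\<epsilon> < \<beta> / (real n + 1)"
    and L: "pac_quantum_learner (2^n) \<epsilon> \<delta> (zipf (2^n)) m M"
  shows "2 ^ (2^n) * (1 - \<delta>) * (\<beta> powr (\<beta> * 2^n) * (1-\<beta>) powr ((1-\<beta>) * 2^n)) \<le> real ((2 * 2^n)^m)"
proof -
  define N :: nat where "N = 2^n"
  have N1: "N \<ge> 1" unfolding N_def by simp
  define F where "F = boolfuns N"
  define P where "P c h = outcome_prob N m M (zipf N) c h" for c h
  define G where "G h = {c\<in>F. err N (zipf N) c h \<le> \<epsilon>}" for h
  define Bd where "Bd = card {S\<in>Pow {1..N}. real (card S) \<le> \<beta> * card {1..N}}"
  define K where "K = \<beta> powr (\<beta> * N) * (1-\<beta>) powr ((1-\<beta>) * N)"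
  have povm: "is_povm N m M" using L unfolding pac_quantum_learner_def N_def by blast
  have good: "\<forall>c\<in>F. (\<Sum>h\<in>{h\<in>F. err N (zipf N) c h \<le> \<epsilon>}. P c h) \<ge> 1 - \<delta>"
    using L unfolding pac_quantum_learner_def N_def F_def P_def by blast
  have finF: "finite F" unfolding F_def by (rule fin_boolfuns)
  have "real (card F) * (1 - \<delta>) = (\<Sum>c\<in>F. 1 - \<delta>)" by simp
  also have "\<dots> \<le> (\<Sum>c\<in>F. \<Sum>h\<in>{h\<in>F. err N (zipf N) c h \<le> \<epsilon>}. P c h)"
    by (rule sum_mono) (use good in blast)
  also have "\<dots> = (\<Sum>c\<in>F. \<Sum>h\<in>F. if err N (zipf N) c h \<le> \<epsilon> then P c h else 0)"
    by (rule sum.cong[OF refl]) (rule sum.inter_filter[OF finF])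
  also have "\<dots> = (\<Sum>h\<in>F. \<Sum>c\<in>F. if err N (zipf N) c h \<le> \<epsilon> then P c h else 0)"
    by (rule sum.swap)
  also have "\<dots> = (\<Sum>h\<in>F. \<Sum>c\<in>G h. P c h)"
    unfolding G_def by (rule sum.cong[OF refl]) (rule sum.inter_filter[OF finF, symmetric])
  also have "\<dots> \<le> (\<Sum>h\<in>F. real Bd * Tr N m M h)"
  proof (rule sum_mono)
    fix h assume h: "h \<in> F"
    have "(\<Sum>c\<in>G h. P c h) \<le> (\<Sum>c\<in>G h. Tr N m M h)"
      unfolding P_def by (rule sum_mono) (rule prob_le_Tr[OF N1 povm h[unfolded F_def]])
    also have "\<dots> = real (card (G h)) * Tr N m M h" by simp
    also have "\<dots> \<le> real Bd * Tr N m M h"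
    proof (rule mult_right_mono)
      show "real (card (G h)) \<le> real Bd"
        unfolding G_def F_def Bd_def N_def using ball_card[OF n e0 eb, of h] by simp
      show "0 \<le> Tr N m M h" by (rule Tr_nonneg[OF povm h[unfolded F_def]])
    qed
    finally show "(\<Sum>c\<in>G h. P c h) \<le> real Bd * Tr N m M h" .
  qed
  also have "\<dots> = real Bd * real ((2 * N)^m)"
    unfolding sum_distrib_left[symmetric] F_def Tr_sum[OF povm] ..
  finally have A: "real (card F) * (1 - \<delta>) \<le> real Bd * real ((2 * N)^m)" .
  have BK: "real Bd * K \<le> 1"
    unfolding Bd_def K_def using tail_bound[of "{1..N}" \<beta>] b0 b1 by simp
  have K0: "K \<ge> 0" unfolding K_def by simp
  have "real (card F) * (1 - \<delta>) * K \<le> real Bd * real ((2 * N)^m) * K"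
    by (rule mult_right_mono[OF A K0])
  also have "\<dots> = (real Bd * K) * real ((2 * N)^m)" by simp
  also have "\<dots> \<le> 1 * real ((2 * N)^m)" by (rule mult_right_mono[OF BK]) simp
  finally have "real (card F) * (1 - \<delta>) * K \<le> real ((2 * N)^m)" by simp
  moreover have "real (card F) = 2 ^ N" unfolding F_def card_boolfuns by simp
  ultimately show ?thesis unfolding K_def N_def by simp
qed

lemma log_bound:
  fixes n m :: nat and \<beta> \<epsilon> \<delta> :: real
  assumes n: "n \<ge> 1" and b0: "0 < \<beta>" and b1: "\<beta> \<le> 1/2" and e0: "0 \<le> \<epsilon>"
    and eb: "\<epsilon> < \<beta> / (real n + 1)" and d1: "\<delta> < 1"
    and L: "pac_quantum_learner (2^n) \<epsilon> \<delta> (zipf (2^n)) m M"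
  shows "real (2^n) * (1 - bin_entropy \<beta>) + log 2 (1 - \<delta>) \<le> real m * (real n + 1)"
proof -
  define N :: real where "N = 2^n"
  define K where "K = \<beta> powr (\<beta> * N) * (1-\<beta>) powr ((1-\<beta>) * N)"
  have q0: "1 - \<beta> > 0" using b1 by simp
  have kk: "2 ^ (2^n) * (1 - \<delta>) * K \<le> real ((2 * 2^n)^m)"
    using key[OF n b0 b1 e0 eb L] unfolding K_def N_def by simp
  have p1: "(2::real) ^ (2^n) > 0" by simp
  have p2: "1 - \<delta> > 0" using d1 by simp
  have pK: "K > 0" unfolding K_def using b0 q0 by simp
  have "log 2 (2 ^ (2^n) * (1 - \<delta>) * K) \<le> log 2 (real ((2 * 2^n)^m))"
    using kk p1 p2 pK by (subst log_le_cancel_iff) simp_all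
  moreover have "log 2 (2 ^ (2^n) * (1 - \<delta>) * K) = N + log 2 (1 - \<delta>) + log 2 K"
    using p1 p2 pK by (simp add: log_mult_pos log_nat_power N_def)
  moreover have "log 2 K = - N * bin_entropy \<beta>"
    unfolding K_def bin_entropy_def using b0 q0 by (simp add: log_mult_pos log_powr algebra_simps)
  moreover have "real ((2 * 2^n)^m) = (2::real) ^ ((n+1) * m)"
  proof -
    have "(2 * 2^n)^m = (2::nat) ^ ((n+1) * m)" by (simp add: power_mult[symmetric] power_Suc[symmetric] del: power_Suc)
    then show ?thesis by simp
  qed
  moreover have "log 2 ((2::real) ^ ((n+1) * m)) = real m * (real n + 1)"
    by (simp add: log_nat_power algebra_simps)
  ultimately show ?thesis unfolding N_def by (simp add: algebra_simps)
qed

theorem mainTheorem4: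
  shows "\<exists>C::real > 0. \<forall>(n::nat) (\<beta>::real) (\<epsilon>::real) (\<delta>::real) (m::nat) M.
     n \<ge> 1 \<and> 0 < \<beta> \<and> \<beta> \<le> 1/2 \<and> 0 \<le> \<epsilon> \<and> \<epsilon> < \<beta> / (real n + 1) \<and> 0 \<le> \<delta> \<and> \<delta> \<le> 1 \<and>
     pac_quantum_learner (2^n) \<epsilon> \<delta> (zipf (2^n)) m M \<longrightarrow>
     real m \<ge> C * ((1 - \<delta>) * (1 - bin_entropy \<beta>) * real (2^n) - bin_entropy \<delta>) / real n"
proof (intro exI[of _ "1/2"] conjI allI impI)
  show "(0::real) < 1/2" by simp
next
  fix n :: nat and \<beta> \<epsilon> \<delta> :: real and m :: nat and M
  assume H: "n \<ge> 1 \<and> 0 < \<beta> \<and> \<beta> \<le> 1/2 \<and> 0 \<le> \<epsilon> \<and> \<epsilon> < \<beta> / (real n + 1) \<and> 0 \<le> \<delta> \<and> \<delta> \<le> 1 \<and>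
     pac_quantum_learner (2^n) \<epsilon> \<delta> (zipf (2^n)) m M"
  then have n: "n \<ge> 1" and b0: "0 < \<beta>" and b1: "\<beta> \<le> 1/2" and e0: "0 \<le> \<epsilon>"
    and eb: "\<epsilon> < \<beta> / (real n + 1)" and d0: "0 \<le> \<delta>" and d1: "\<delta> \<le> 1"
    and L: "pac_quantum_learner (2^n) \<epsilon> \<delta> (zipf (2^n)) m M" by auto
  define X where "X = (1 - \<delta>) * (1 - bin_entropy \<beta>) * real (2^n) - bin_entropy \<delta>"
  define A where "A = real (2^n) * (1 - bin_entropy \<beta>)"
  have rn: "real n \<ge> 1" using n by simp
  have Xm: "X \<le> real m * (real n + 1)"
  proof (cases "X \<le> 0")
    case True
    then show ?thesis by (simp add: order_trans[OF True])
  next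
    case False
    then have Xp: "X > 0" by simp
    have dl: "\<delta> < 1"
    proof (rule ccontr)
      assume "\<not> \<delta> < 1"
      then have "\<delta> = 1" using d1 by simp
      then have "X = 0" unfolding X_def bin_entropy_def by simp
      then show False using Xp by simp
    qed
    have lb: "A + log 2 (1 - \<delta>) \<le> real m * (real n + 1)"
      unfolding A_def by (rule log_bound[OF n b0 b1 e0 eb dl L])
    have XA: "X \<le> A + log 2 (1 - \<delta>)"
    proof (cases "\<delta> = 0")
      case True
      then show ?thesis unfolding X_def A_def bin_entropy_def by (simp add: algebra_simps)
    next
      case False
      then have dp: "\<delta> > 0" using d0 by simp
      define L1 where "L1 = log 2 \<delta>"
      define L2 where "L2 = log 2 (1 - \<delta>)"
      have L1n: "L1 \<le> 0" unfolding L1_def using dp d1 by simp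
      have L2n: "L2 \<le> 0" unfolding L2_def using dp dl by simp
      have Hd: "bin_entropy \<delta> = - \<delta> * L1 - (1 - \<delta>) * L2"
        unfolding bin_entropy_def L1_def L2_def by simp
      have XA': "X = (1 - \<delta>) * A - bin_entropy \<delta>" unfolding X_def A_def by (simp add: algebra_simps)
      have "(1 - \<delta>) * A > - (1 - \<delta>) * L2"
      proof -
        have "- \<delta> * L1 \<ge> 0" using dp L1n by (simp add: mult_nonneg_nonpos)
        then show ?thesis using Xp unfolding XA' Hd by linarith
      qed
      then have "(1 - \<delta>) * (A + L2) > 0" by (simp add: algebra_simps)
      then have AL: "A + L2 > 0" using dl by (simp add: zero_less_mult_iff)
      then have "A + L2 - L1 \<ge> 0" using L1n by linarith
      then have "\<delta> * (A + L2 - L1) \<ge> 0" using dp by simp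
      moreover have "A + L2 - X = \<delta> * (A + L2 - L1)"
        unfolding XA' Hd by (simp add: algebra_simps)
      ultimately show ?thesis unfolding L2_def by linarith
    qed
    show ?thesis using XA lb by linarith
  qed
  show "real m \<ge> 1/2 * X / real n"
  proof (cases "X \<le> 0")
    case True
    then have "1/2 * X / real n \<le> 0" using rn by (simp add: divide_nonpos_pos)
    then show ?thesis by simp
  next
    case False
    have "1/2 * X / real n = X / (2 * real n)" by simp
    also have "\<dots> \<le> X / (real n + 1)" using False rn by (intro divide_left_mono) simp_all
    also have "\<dots> \<le> real m" using Xm rn by (simp add: divide_le_eq)
    finally show ?thesis .
  qed
qed

end
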